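(* The matrix $I+\Pi S$ acting on $\mathbb V(\Gamma_\oplus)$ is invertible; every eigenvalue $\lambda$ of $I+\Pi S$ satisfies $\lambda\ne0$ and $|1-\lambda|\le1$; $\|(I+\Pi S)p\|_T\le2\|p\|_T$ for all $p\in\mathbb V(\Gamma_\oplus)$; and there exists a constant $\alpha>0$ such that $$\operatorname{Re}\big((p,(I+\Pi S)p)_T\big)\ge\alpha\|p\|_T^2\qquad\text{for all }p\in\mathbb V(\Gamma_\oplus).$$
   Context: Let $\mathcal E$ be a finite set, $\mathcal E_1,\dots,\mathcal E_J$ subsets with $\mathcal E=\bigcup_j\mathcal E_j$, $\Sigma:=\bigcup_{1\le j<k\le J}(\mathcal E_j\cap\mathcal E_k)$, $\Gamma$ any set with $\Sigma\subset\Gamma\subset\mathcal E$, $\Gamma_j:=\Gamma\cap\mathcal E_j$. $\mathbb V(\mathcal F):=\mathbb C^{\mathcal F}$; $\mathbb V(\mathcal E_\oplus):=\prod_j\mathbb V(\mathcal E_j)$, $\mathbb V(\Gamma_\oplus):=\prod_j\mathbb V(\Gamma_j)$. Restrictions: $Rx=((x_e)_{e\in\mathcal E_1},\dots,(x_e)_{e\in\mathcal E_J})$ for $x\in\mathbb V(\mathcal E)$; $Qx=((x_e)_{e\in\Gamma_1},\dots,(x_e)_{e\in\Gamma_J})$ for $x\in\mathbb V(\Gamma)$; $B_jx=(x_e)_{e\in\Gamma_j}$ for $x\in\mathbb V(\mathcal E_j)$, $B:=\mathrm{diag}(B_j)$; $\top$ is the non-conjugated transpose. For each $j$ let $T_j$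 be a real symmetric positive definite matrix on $\mathbb V(\Gamma_j)$, $T:=\mathrm{diag}(T_1,\dots,T_J)$, $(x,y)_T:=x^\top T\bar y$, $\|x\|_T^2:=(x,x)_T$. $P:=Q(Q^\top TQ)^{-1}Q^\top T$ (the $T$-orthogonal projector onto $\operatorname{range}(Q)$) and $\Pi:=2P-I$. Let $A=\mathrm{diag}(A_1,\dots,A_J)$, $A_j\in\mathbb C^{\mathcal E_j\times\mathcal E_j}$, satisfying (A1) $\operatorname{Im}(\bar v^\top Av)\le0$ for all $v\in\mathbb V(\mathcal E_\oplus)$ and (A2) $R^\top AR$ invertible; then $A-\imath B^\top TB$ is invertible. Scattering matrix: $S:=I+2\imath B(A-\imath B^\top TB)^{-1}B^\top T$. *)

theory Defs
  imports Complex_Main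
begin

text \<open>Matrices over finite index sets: a matrix is a function
  M :: 'i => 'k => complex, only its entries on the relevant index sets matter;
  products sum over an explicitly given finite index set.\<close>

definition mmul :: "'j set \<Rightarrow> ('i \<Rightarrow> 'j \<Rightarrow> complex) \<Rightarrow> ('j \<Rightarrow> 'k \<Rightarrow> complex) \<Rightarrow> 'i \<Rightarrow> 'k \<Rightarrow> complex" where
  "mmul K M N = (\<lambda>i k. \<Sum>j\<in>K. M i j * N j k)"

definition mvec :: "'k set \<Rightarrow> ('i \<Rightarrow> 'k \<Rightarrow> complex) \<Rightarrow> ('k \<Rightarrow> complex) \<Rightarrow> 'i \<Rightarrow> complex" where
  "mvec K M x = (\<lambda>i. \<Sum>k\<in>K. M i k * x k)"

definition mI :: "'i \<Rightarrow> 'i \<Rightarrow> complex" where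
  "mI = (\<lambda>i k. if i = k then 1 else 0)"

definition mT :: "('i \<Rightarrow> 'k \<Rightarrow> complex) \<Rightarrow> 'k \<Rightarrow> 'i \<Rightarrow> complex" where
  "mT M = (\<lambda>k i. M i k)"

definition is_minv :: "'i set \<Rightarrow> ('i \<Rightarrow> 'i \<Rightarrow> complex) \<Rightarrow> ('i \<Rightarrow> 'i \<Rightarrow> complex) \<Rightarrow> bool" where
  "is_minv I M N \<longleftrightarrow> (\<forall>i\<in>I. \<forall>k\<in>I. mmul I M N i k = mI i k \<and> mmul I N M i k = mI i k)"

definition minvertible :: "'i set \<Rightarrow> ('i \<Rightarrow> 'i \<Rightarrow> complex) \<Rightarrow> bool" where
  "minvertible I M \<longleftrightarrow> (\<exists>N. is_minv I M N)"

definition minv :: "'i set \<Rightarrow> ('i \<Rightarrow> 'i \<Rightarrow> complex) \<Rightarrow> 'i \<Rightarrow> 'i \<Rightarrow> complex" where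
  "minv I M = (SOME N. is_minv I M N)"

text \<open>Index sets: E_oplus = disjoint union of the E_j, Gamma_oplus = disjoint union of
  the Gamma_j = Gamma \<inter> E_j, j = 1..J.\<close>

definition EO :: "nat \<Rightarrow> (nat \<Rightarrow> 'e set) \<Rightarrow> (nat \<times> 'e) set" where
  "EO J Es = {(j, e). j \<in> {1..J} \<and> e \<in> Es j}"

definition GO :: "nat \<Rightarrow> (nat \<Rightarrow> 'e set) \<Rightarrow> 'e set \<Rightarrow> (nat \<times> 'e) set" where
  "GO J Es \<Gamma> = {(j, e). j \<in> {1..J} \<and> e \<in> \<Gamma> \<inter> Es j}"

definition Sigma_set :: "nat \<Rightarrow> (nat \<Rightarrow> 'e set) \<Rightarrow> 'e set" where
  "Sigma_set J Es = (\<Union>j\<in>{1..J}. \<Union>k\<in>{1..J}. if j < k then Es j \<inter> Es k else {})"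

definition blockdiag :: "(nat \<Rightarrow> 'e \<Rightarrow> 'e \<Rightarrow> complex) \<Rightarrow> nat \<times> 'e \<Rightarrow> nat \<times> 'e \<Rightarrow> complex" where
  "blockdiag Mb = (\<lambda>(j, e) (k, e'). if j = k then Mb j e e' else 0)"

text \<open>Restriction R : V(E) -> V(E_oplus), Q : V(Gamma) -> V(Gamma_oplus),
  B : V(E_oplus) -> V(Gamma_oplus) (all 0/1 matrices).\<close>
definition Rmat :: "nat \<times> 'e \<Rightarrow> 'e \<Rightarrow> complex" where
  "Rmat = (\<lambda>(j, e) e'. if e = e' then 1 else 0)"

definition Qmat :: "nat \<times> 'e \<Rightarrow> 'e \<Rightarrow> complex" where
  "Qmat = (\<lambda>(j, e) e'. if e = e' then 1 else 0)"

definition Bmat :: "nat \<times> 'e \<Rightarrow> nat \<times> 'e \<Rightarrow> complex" where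
  "Bmat = (\<lambda>(j, e) (k, e'). if j = k \<and> e = e' then 1 else 0)"

definition Tmat :: "(nat \<Rightarrow> 'e \<Rightarrow> 'e \<Rightarrow> real) \<Rightarrow> nat \<times> 'e \<Rightarrow> nat \<times> 'e \<Rightarrow> complex" where
  "Tmat Tb = blockdiag (\<lambda>j e e'. complex_of_real (Tb j e e'))"

definition innerT :: "nat \<Rightarrow> (nat \<Rightarrow> 'e set) \<Rightarrow> 'e set \<Rightarrow> (nat \<Rightarrow> 'e \<Rightarrow> 'e \<Rightarrow> real)
    \<Rightarrow> (nat \<times> 'e \<Rightarrow> complex) \<Rightarrow> (nat \<times> 'e \<Rightarrow> complex) \<Rightarrow> complex" where
  "innerT J Es \<Gamma> Tb x y = (\<Sum>i\<in>GO J Es \<Gamma>. \<Sum>k\<in>GO J Es \<Gamma>. x i * Tmat Tb i k * cnj (y k))"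

definition normT :: "nat \<Rightarrow> (nat \<Rightarrow> 'e set) \<Rightarrow> 'e set \<Rightarrow> (nat \<Rightarrow> 'e \<Rightarrow> 'e \<Rightarrow> real)
    \<Rightarrow> (nat \<times> 'e \<Rightarrow> complex) \<Rightarrow> real" where
  "normT J Es \<Gamma> Tb x = sqrt (Re (innerT J Es \<Gamma> Tb x x))"

definition Pmat :: "nat \<Rightarrow> (nat \<Rightarrow> 'e set) \<Rightarrow> 'e set \<Rightarrow> (nat \<Rightarrow> 'e \<Rightarrow> 'e \<Rightarrow> real)
    \<Rightarrow> nat \<times> 'e \<Rightarrow> nat \<times> 'e \<Rightarrow> complex" where
  "Pmat J Es \<Gamma> Tb =
     (let G = GO J Es \<Gamma>; T = Tmat Tb;
          QTQ = mmul G (mmul G (mT Qmat) T) Qmat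
      in mmul G (mmul \<Gamma> (mmul \<Gamma> Qmat (minv \<Gamma> QTQ)) (mT Qmat)) T)"

definition Pimat :: "nat \<Rightarrow> (nat \<Rightarrow> 'e set) \<Rightarrow> 'e set \<Rightarrow> (nat \<Rightarrow> 'e \<Rightarrow> 'e \<Rightarrow> real)
    \<Rightarrow> nat \<times> 'e \<Rightarrow> nat \<times> 'e \<Rightarrow> complex" where
  "Pimat J Es \<Gamma> Tb = (\<lambda>i k. 2 * Pmat J Es \<Gamma> Tb i k - mI i k)"

definition Smat :: "nat \<Rightarrow> (nat \<Rightarrow> 'e set) \<Rightarrow> 'e set \<Rightarrow> (nat \<Rightarrow> 'e \<Rightarrow> 'e \<Rightarrow> complex)
    \<Rightarrow> (nat \<Rightarrow> 'e \<Rightarrow> 'e \<Rightarrow> real) \<Rightarrow> nat \<times> 'e \<Rightarrow> nat \<times> 'e \<Rightarrow> complex" where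
  "Smat J Es \<Gamma> Ab Tb =
     (let G = GO J Es \<Gamma>; EE = EO J Es; T = Tmat Tb; A = blockdiag Ab;
          BTB = mmul G (mmul G (mT Bmat) T) Bmat;
          K = (\<lambda>i k. A i k - \<i> * BTB i k)
      in (\<lambda>i k. mI i k + 2 * \<i> *
            mmul G (mmul EE (mmul EE Bmat (minv EE K)) (mT Bmat)) T i k))"

end

theory Submission
  imports Defs "Jordan_Normal_Form.Determinant" "HOL-Analysis.Analysis"
begin

lemma mvec_mmul:
  assumes "finite K" "finite L"
  shows "mvec K (mmul L M N) x = mvec L M (mvec K N x)"
  unfolding mvec_def mmul_def
  by (rule ext) (simp add: sum_distrib_left sum_distrib_right mult.assoc sum.swap[of _ K L])

lemma mvec_mI: "finite I \<Longrightarrow> mvec I mI x i = (if i \<in> I then x i else 0)"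
proof -
  have "(\<Sum>k\<in>I. (if i = k then 1 else 0) * x k) = (\<Sum>k\<in>I. if i = k then x k else 0)"
    by (rule sum.cong) auto
  thus "finite I \<Longrightarrow> ?thesis" unfolding mvec_def mI_def by simp
qed

lemma mvec_cong: "(\<And>k. k \<in> K \<Longrightarrow> x k = x' k) \<Longrightarrow> mvec K M x = mvec K M x'"
  unfolding mvec_def by (rule ext) (auto intro: sum.cong)

lemma mvec_add: "mvec K M (\<lambda>k. a k + b k) = (\<lambda>i. mvec K M a i + mvec K M b i)"
  unfolding mvec_def by (simp add: distrib_left sum.distrib)

lemma mvec_diff: "mvec K M (\<lambda>k. a k - b k) = (\<lambda>i. mvec K M a i - mvec K M b i)"
  unfolding mvec_def by (simp add: right_diff_distrib sum_subtractf)

lemma mvec_scale: "mvec K M (\<lambda>k. c * a k) = (\<lambda>i. c * mvec K M a i)"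
  unfolding mvec_def by (simp add: sum_distrib_left mult.left_commute)

lemma mvec_zero: "mvec K M (\<lambda>k. 0) = (\<lambda>i. 0)"
  unfolding mvec_def by simp

lemma mvec_matadd: "mvec K (\<lambda>i k. M i k + N i k) x i = mvec K M x i + mvec K N x i"
  unfolding mvec_def by (simp add: distrib_right sum.distrib)

lemma mvec_matdiff: "mvec K (\<lambda>i k. M i k - N i k) x i = mvec K M x i - mvec K N x i"
  unfolding mvec_def by (simp add: left_diff_distrib sum_subtractf)

lemma mvec_matscale: "mvec K (\<lambda>i k. c * M i k) x i = c * mvec K M x i"
  unfolding mvec_def by (simp add: sum_distrib_left mult.assoc)

lemma minv_left:
  assumes "finite I" "is_minv I N Ni" "\<And>i. i \<in> I \<Longrightarrow> mvec I N x i = b i" "i \<in> I"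
  shows "x i = mvec I Ni b i"
proof -
  have "mvec I Ni b = mvec I Ni (mvec I N x)" using assms(3) by (intro mvec_cong) simp
  also have "\<dots> = mvec I (mmul I Ni N) x" using assms(1) by (simp add: mvec_mmul)
  finally have e: "mvec I Ni b i = mvec I (mmul I Ni N) x i" by simp
  also have "\<dots> = mvec I mI x i" unfolding mvec_def
    using assms(2,4) unfolding is_minv_def by (intro sum.cong) auto
  finally show ?thesis using assms(1,4) by (simp add: mvec_mI)
qed

lemma minv_right:
  assumes "finite I" "is_minv I N Ni" "i \<in> I"
  shows "mvec I N (mvec I Ni b) i = b i"
proof -
  have "mvec I N (mvec I Ni b) i = mvec I (mmul I N Ni) b i" using assms(1) by (simp add: mvec_mmul)
  also have "\<dots> = mvec I mI b i" unfolding mvec_def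
    using assms(2,3) unfolding is_minv_def by (intro sum.cong) auto
  finally show ?thesis using assms(1,3) by (simp add: mvec_mI)
qed

lemma minv_is: "minvertible I N \<Longrightarrow> is_minv I N (minv I N)"
  unfolding minvertible_def minv_def by (erule someI_ex)

lemma inj_imp_minvertible:
  fixes N :: "'i \<Rightarrow> 'i \<Rightarrow> complex"
  assumes fin: "finite I" and inj: "\<And>x. (\<forall>i\<in>I. mvec I N x i = 0) \<Longrightarrow> (\<forall>i\<in>I. x i = 0)"
  shows "minvertible I N"
proof -
  define n where "n = card I"
  obtain g where g: "bij_betw g {0..<n} I" using ex_bij_betw_nat_finite[OF fin] n_def by blast
  define h where "h = inv_into {0..<n} g"
  have hg: "\<And>a. a < n \<Longrightarrow> h (g a) = a" using g unfolding h_def bij_betw_def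
    by (simp add: inv_into_f_f)
  have gh: "\<And>i. i \<in> I \<Longrightarrow> g (h i) = i" using g unfolding h_def bij_betw_def
    by (simp add: f_inv_into_f)
  have hI: "\<And>i. i \<in> I \<Longrightarrow> h i < n" using g unfolding h_def bij_betw_def
    by (metis atLeastLessThan_iff inv_into_into)
  have gI: "\<And>a. a < n \<Longrightarrow> g a \<in> I" using g unfolding bij_betw_def by auto
  have reidx: "\<And>f. sum f I = (\<Sum>b=0..<n. f (g b))"
    by (simp only: sum.reindex_bij_betw[OF g])
  define NM where "NM = Matrix.mat n n (\<lambda>(a,b). N (g a) (g b))"
  have NMc: "NM \<in> carrier_mat n n" unfolding NM_def by simp
  have "Determinant.det NM \<noteq> 0"
  proof
    assume "Determinant.det NM = 0"
    then obtain v where v: "v \<in> carrier_vec n" "v \<noteq> 0\<^sub>v n" "NM *\<^sub>v v = 0\<^sub>v n"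
      using det_0_iff_vec_prod_zero_field[OF NMc] by blast
    define x where "x i = Matrix.vec_index v (h i)" for i
    have "\<forall>i\<in>I. mvec I N x i = 0"
    proof
      fix i assume i: "i \<in> I"
      have "mvec I N x i = (\<Sum>b=0..<n. N i (g b) * Matrix.vec_index v b)"
        unfolding mvec_def x_def reidx by (intro sum.cong) (auto simp: hg)
      also have "\<dots> = Matrix.vec_index (NM *\<^sub>v v) (h i)"
        using v(1) hI[OF i] gh[OF i]
        by (simp add: NM_def index_mult_mat_vec scalar_prod_def)
      also have "\<dots> = 0" using v(3) hI[OF i] by simp
      finally show "mvec I N x i = 0" .
    qed
    hence "\<forall>i\<in>I. x i = 0" by (rule inj)
    hence x0: "\<And>i. i \<in> I \<Longrightarrow> x i = 0" by blast
    have "v = 0\<^sub>v n"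
    proof (rule eq_vecI)
      fix b assume b: "b < dim_vec (0\<^sub>v n)"
      hence b': "b < n" by simp
      have "Matrix.vec_index v b = x (g b)" unfolding x_def using hg[OF b'] by simp
      also have "\<dots> = 0" using x0 gI[OF b'] by blast
      finally show "Matrix.vec_index v b = Matrix.vec_index (0\<^sub>v n) b" using b' by simp
    next
      show "dim_vec v = dim_vec (0\<^sub>v n)" using v(1) by simp
    qed
    thus False using v(2) by simp
  qed
  from det_non_zero_imp_unit[OF NMc this, of "()"]
  obtain B where B: "B \<in> carrier_mat n n" "B * NM = 1\<^sub>m n"
    unfolding Units_def ring_mat_def by auto
  have NB: "NM * B = 1\<^sub>m n" by (rule mat_mult_left_right_inverse[OF B(1) NMc B(2)])
  define Ni where "Ni i k = B $$ (h i, h k)" for i k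
  have hinj: "\<And>i k. i \<in> I \<Longrightarrow> k \<in> I \<Longrightarrow> (h i = h k) = (i = k)"
    using gh by metis
  have "is_minv I N Ni"
    unfolding is_minv_def
  proof (intro ballI conjI)
    fix i k assume i: "i \<in> I" and k: "k \<in> I"
    have "mmul I N Ni i k = (\<Sum>b=0..<n. NM $$ (h i, b) * B $$ (b, h k))"
      unfolding mmul_def Ni_def reidx using hI[OF i] gh[OF i]
      by (intro sum.cong) (auto simp: hg NM_def)
    also have "\<dots> = (NM * B) $$ (h i, h k)"
      using B(1) hI[OF i] hI[OF k] NMc
      by (simp add: index_mult_mat scalar_prod_def)
    also have "\<dots> = mI i k" using NB hI[OF i] hI[OF k] hinj[OF i k]
      by (simp add: mI_def)
    finally show "mmul I N Ni i k = mI i k" .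
    have "mmul I Ni N i k = (\<Sum>b=0..<n. B $$ (h i, b) * NM $$ (b, h k))"
      unfolding mmul_def Ni_def reidx using hI[OF k] gh[OF k]
      by (intro sum.cong) (auto simp: hg NM_def)
    also have "\<dots> = (B * NM) $$ (h i, h k)"
      using B(1) hI[OF i] hI[OF k] NMc
      by (simp add: index_mult_mat scalar_prod_def)
    also have "\<dots> = mI i k" using B(2) hI[OF i] hI[OF k] hinj[OF i k]
      by (simp add: mI_def)
    finally show "mmul I Ni N i k = mI i k" .
  qed
  thus ?thesis unfolding minvertible_def by blast
qed

locale sctx =
  fixes E :: "'e set" and J :: nat and Es :: "nat \<Rightarrow> 'e set" and \<Gamma> :: "'e set"
    and Tb :: "nat \<Rightarrow> 'e \<Rightarrow> 'e \<Rightarrow> real" and Ab :: "nat \<Rightarrow> 'e \<Rightarrow> 'e \<Rightarrow> complex"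
  assumes finE: "finite E"
    and E_union: "E = (\<Union>j\<in>{1..J}. Es j)"
    and Sigma_sub: "Sigma_set J Es \<subseteq> \<Gamma>"
    and Gamma_sub: "\<Gamma> \<subseteq> E"
    and T_sym: "\<And>j e e'. j \<in> {1..J} \<Longrightarrow> e \<in> \<Gamma> \<inter> Es j \<Longrightarrow> e' \<in> \<Gamma> \<inter> Es j \<Longrightarrow>
                  Tb j e e' = Tb j e' e"
    and T_posdef: "\<And>j (x :: 'e \<Rightarrow> real). j \<in> {1..J} \<Longrightarrow> (\<exists>e\<in>\<Gamma> \<inter> Es j. x e \<noteq> 0) \<Longrightarrow>
                  (\<Sum>e\<in>\<Gamma> \<inter> Es j. \<Sum>e'\<in>\<Gamma> \<inter> Es j. x e * Tb j e e' * x e') > 0"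
    and A1: "\<And>v. Im (\<Sum>i\<in>EO J Es. \<Sum>k\<in>EO J Es. cnj (v i) * blockdiag Ab i k * v k) \<le> 0"
    and A2: "minvertible E (mmul (EO J Es) (mmul (EO J Es) (mT Rmat) (blockdiag Ab)) Rmat)"
begin

abbreviation "G \<equiv> GO J Es \<Gamma>"
abbreviation "EE \<equiv> EO J Es"
abbreviation "T \<equiv> Tmat Tb"
abbreviation "ip \<equiv> innerT J Es \<Gamma> Tb"
abbreviation "nsq x \<equiv> Re (ip x x)"

lemma finEs: "j \<in> {1..J} \<Longrightarrow> finite (Es j)"
  using finE E_union by (metis UN_upper finite_subset)

lemma EE_eq: "EE = Sigma {1..J} Es"
  unfolding EO_def by auto

lemma G_eq: "G = Sigma {1..J} (\<lambda>j. \<Gamma> \<inter> Es j)"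
  unfolding GO_def by auto

lemma finG: "finite G"
  unfolding G_eq using finEs by (intro finite_SigmaI) auto

lemma finEE: "finite EE"
  unfolding EE_eq using finEs by (intro finite_SigmaI) auto

lemma finGam: "finite \<Gamma>"
  using finE Gamma_sub finite_subset by blast

lemma G_sub: "G \<subseteq> EE"
  unfolding G_eq EE_eq by auto

lemma memG: "(j, e) \<in> G \<longleftrightarrow> j \<in> {1..J} \<and> e \<in> \<Gamma> \<and> e \<in> Es j"
  unfolding GO_def by auto

lemma memEE: "(j, e) \<in> EE \<longleftrightarrow> j \<in> {1..J} \<and> e \<in> Es j"
  unfolding EO_def by auto

lemma uniq:
  assumes "e \<notin> \<Gamma>" "j \<in> {1..J}" "k \<in> {1..J}" "e \<in> Es j" "e \<in> Es k"
  shows "j = k"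
proof (rule ccontr)
  assume "j \<noteq> k"
  hence "j < k \<or> k < j" by arith
  hence "e \<in> Sigma_set J Es"
  proof
    assume "j < k" thus ?thesis unfolding Sigma_set_def
      by (intro UN_I[of j] UN_I[of k]) (use assms in auto)
  next
    assume "k < j" thus ?thesis unfolding Sigma_set_def
      by (intro UN_I[of k] UN_I[of j]) (use assms in auto)
  qed
  thus False using Sigma_sub assms(1) by blast
qed

lemma Gam_cover: "e \<in> \<Gamma> \<Longrightarrow> \<exists>j\<in>{1..J}. e \<in> Es j"
  using Gamma_sub E_union by blast

lemma T_val: "T (j, e) (k, e') = (if j = k then complex_of_real (Tb j e e') else 0)"
  unfolding Tmat_def blockdiag_def by simp

lemma T_symG: "i \<in> G \<Longrightarrow> k \<in> G \<Longrightarrow> T i k = T k i"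
  by (cases i, cases k) (auto simp: T_val memG intro: T_sym)

lemma T_cnj: "cnj (T i k) = T i k"
  by (cases i, cases k) (simp add: T_val)

lemma ip_add_left: "ip (\<lambda>i. a i + b i) y = ip a y + ip b y"
  unfolding innerT_def by (simp add: distrib_right sum.distrib)

lemma ip_add_right: "ip x (\<lambda>i. a i + b i) = ip x a + ip x b"
  unfolding innerT_def by (simp add: distrib_left sum.distrib)

lemma ip_scale_left: "ip (\<lambda>i. c * a i) y = c * ip a y"
  unfolding innerT_def by (simp add: sum_distrib_left mult.assoc)

lemma ip_scale_right: "ip x (\<lambda>i. c * a i) = cnj c * ip x a"
  unfolding innerT_def by (simp add: sum_distrib_left mult_ac)

lemma ip_cong: "(\<And>i. i \<in> G \<Longrightarrow> x i = x' i) \<Longrightarrow> (\<And>i. i \<in> G \<Longrightarrow> y i = y' i) \<Longrightarrow> ip x y = ip x' y'"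
  unfolding innerT_def by (intro sum.cong) auto

lemma ip_sym: "ip y x = cnj (ip x y)"
proof -
  have "cnj (ip x y) = (\<Sum>i\<in>G. \<Sum>k\<in>G. cnj (x i) * T i k * y k)"
    unfolding innerT_def by (simp add: T_cnj)
  also have "\<dots> = (\<Sum>k\<in>G. \<Sum>i\<in>G. cnj (x i) * T i k * y k)" by (rule sum.swap)
  also have "\<dots> = ip y x" unfolding innerT_def
    by (intro sum.cong refl) (simp add: T_symG mult_ac)
  finally show ?thesis by simp
qed

lemma ip_alt: "ip x y = (\<Sum>i\<in>G. x i * cnj (mvec G T y i))"
  unfolding innerT_def mvec_def by (simp add: sum_distrib_left T_cnj mult.assoc)

lemma ip_alt2: "cnj (ip x y) = (\<Sum>i\<in>G. cnj (x i) * mvec G T y i)"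
  unfolding ip_alt by simp

lemma ip_real: "ip x x = complex_of_real (nsq x)"
proof -
  have "Im (ip x x) = 0" using ip_sym[of x x] by (metis cnj.sel(2) neg_equal_zero)
  thus ?thesis by (simp add: complex_eq_iff)
qed

definition qf :: "nat \<Rightarrow> ('e \<Rightarrow> real) \<Rightarrow> real" where
  "qf j a = (\<Sum>e\<in>\<Gamma> \<inter> Es j. \<Sum>e'\<in>\<Gamma> \<inter> Es j. a e * Tb j e e' * a e')"

lemma qf_nonneg: "j \<in> {1..J} \<Longrightarrow> qf j a \<ge> 0"
proof (cases "\<exists>e\<in>\<Gamma> \<inter> Es j. a e \<noteq> 0")
  case True
  assume "j \<in> {1..J}"
  thus ?thesis using T_posdef[OF _ True] unfolding qf_def by (simp add: less_imp_le)
next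
  case False thus ?thesis unfolding qf_def by simp
qed

lemma sum_delta_block:
  assumes "j \<in> K" "finite K"
  shows "(\<Sum>k\<in>K. \<Sum>e'\<in>B k. if j = k then f k e' else (0::complex)) = (\<Sum>e'\<in>B j. f j e')"
proof -
  have "(\<Sum>k\<in>K. \<Sum>e'\<in>B k. if j = k then f k e' else 0) = (\<Sum>k\<in>K. if j = k then (\<Sum>e'\<in>B k. f k e') else 0)"
    by (intro sum.cong) auto
  also have "\<dots> = (\<Sum>e'\<in>B j. f j e')" using assms by (simp add: sum.delta)
  finally show ?thesis .
qed

lemma sum_Sigma_gen:
  assumes "finite A" "\<forall>x\<in>A. finite (B x)"
  shows "sum F (Sigma A B) = (\<Sum>x\<in>A. \<Sum>y\<in>B x. F (x,y))"
  using sum.Sigma[OF assms, of "\<lambda>x y. F (x,y)"] by simp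

lemma ip_blocks:
  "ip x y = (\<Sum>j\<in>{1..J}. \<Sum>e\<in>\<Gamma> \<inter> Es j. \<Sum>e'\<in>\<Gamma> \<inter> Es j.
               x (j, e) * complex_of_real (Tb j e e') * cnj (y (j, e')))"
proof -
  have fin: "\<forall>j\<in>{1..J}. finite (\<Gamma> \<inter> Es j)" using finEs by auto
  have "ip x y = (\<Sum>j\<in>{1..J}. \<Sum>e\<in>\<Gamma> \<inter> Es j. \<Sum>k\<in>{1..J}. \<Sum>e'\<in>\<Gamma> \<inter> Es k.
               x (j, e) * T (j,e) (k,e') * cnj (y (k, e')))"
    unfolding innerT_def G_eq sum_Sigma_gen[OF finite_atLeastAtMost fin] by (rule refl)
  also have "\<dots> = (\<Sum>j\<in>{1..J}. \<Sum>e\<in>\<Gamma> \<inter> Es j. \<Sum>e'\<in>\<Gamma> \<inter> Es j.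
               x (j, e) * complex_of_real (Tb j e e') * cnj (y (j, e')))"
  proof (intro sum.cong refl)
    fix j e assume j: "j \<in> {1..J}"
    have "(\<Sum>k\<in>{1..J}. \<Sum>e'\<in>\<Gamma> \<inter> Es k. x (j, e) * T (j, e) (k, e') * cnj (y (k, e')))
       = (\<Sum>k\<in>{1..J}. \<Sum>e'\<in>\<Gamma> \<inter> Es k. if j = k then x (j, e) * complex_of_real (Tb k e e') * cnj (y (k, e')) else 0)"
      by (intro sum.cong refl) (simp add: T_val)
    also have "\<dots> = (\<Sum>e'\<in>\<Gamma> \<inter> Es j. x (j, e) * complex_of_real (Tb j e e') * cnj (y (j, e')))"
      by (rule sum_delta_block[OF j finite_atLeastAtMost])
    finally show "(\<Sum>k\<in>{1..J}. \<Sum>e'\<in>\<Gamma> \<inter> Es k. x (j, e) * T (j, e) (k, e') * cnj (y (k, e')))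
       = (\<Sum>e'\<in>\<Gamma> \<inter> Es j. x (j, e) * complex_of_real (Tb j e e') * cnj (y (j, e')))" .
  qed
  finally show ?thesis .
qed

lemma Re_trip: "Re (z * complex_of_real t * cnj w) = Re z * t * Re w + Im z * t * Im w"
  by (simp add: algebra_simps)

lemma nsq_blocks: "nsq x = (\<Sum>j\<in>{1..J}. qf j (\<lambda>e. Re (x (j,e))) + qf j (\<lambda>e. Im (x (j,e))))"
proof -
  have "nsq x = (\<Sum>j\<in>{1..J}. \<Sum>e\<in>\<Gamma> \<inter> Es j. \<Sum>e'\<in>\<Gamma> \<inter> Es j.
      Re (x (j,e)) * Tb j e e' * Re (x (j,e')) + Im (x (j,e)) * Tb j e e' * Im (x (j,e')))"
    by (simp only: ip_blocks Re_sum Re_trip)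
  also have "\<dots> = (\<Sum>j\<in>{1..J}. qf j (\<lambda>e. Re (x (j,e))) + qf j (\<lambda>e. Im (x (j,e))))"
    by (simp only: qf_def sum.distrib)
  finally show ?thesis .
qed

lemma nsq_nonneg: "nsq x \<ge> 0"
  unfolding nsq_blocks by (intro sum_nonneg add_nonneg_nonneg qf_nonneg)

lemma nsq_pos:
  assumes "i \<in> G" "x i \<noteq> 0"
  shows "nsq x > 0"
proof -
  obtain j e where i: "i = (j, e)" by (cases i)
  have j: "j \<in> {1..J}" and e: "e \<in> \<Gamma> \<inter> Es j" using assms(1) i memG by auto
  have "Re (x (j,e)) \<noteq> 0 \<or> Im (x (j,e)) \<noteq> 0" using assms(2) i complex_eq_iff by auto
  hence "qf j (\<lambda>e. Re (x (j,e))) + qf j (\<lambda>e. Im (x (j,e))) > 0"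
  proof
    assume "Re (x (j,e)) \<noteq> 0"
    hence "\<exists>e'\<in>\<Gamma> \<inter> Es j. Re (x (j,e')) \<noteq> 0" using e by blast
    from T_posdef[OF j this] have "qf j (\<lambda>e. Re (x (j,e))) > 0" unfolding qf_def .
    thus ?thesis using qf_nonneg[OF j, of "\<lambda>e. Im (x (j,e))"] by linarith
  next
    assume "Im (x (j,e)) \<noteq> 0"
    hence "\<exists>e'\<in>\<Gamma> \<inter> Es j. Im (x (j,e')) \<noteq> 0" using e by blast
    from T_posdef[OF j this] have "qf j (\<lambda>e. Im (x (j,e))) > 0" unfolding qf_def .
    thus ?thesis using qf_nonneg[OF j, of "\<lambda>e. Re (x (j,e))"] by linarith
  qed
  thus ?thesis unfolding nsq_blocks
    by (intro sum_pos2[OF finite_atLeastAtMost j]) (simp_all add: add_nonneg_nonneg qf_nonneg)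
qed

lemma nsq_zero: "nsq x \<le> 0 \<Longrightarrow> i \<in> G \<Longrightarrow> x i = 0"
  using nsq_pos not_less by blast

end

context sctx begin

abbreviation "Qt w \<equiv> mvec G (mT Qmat) w"
abbreviation "Qv z \<equiv> mvec \<Gamma> Qmat z"
abbreviation "QTQ \<equiv> mmul G (mmul G (mT Qmat) T) Qmat"
abbreviation "Pv x \<equiv> mvec G (Pmat J Es \<Gamma> Tb) x"

lemma sum_ind: "finite A \<Longrightarrow> e \<in> A \<Longrightarrow> (\<Sum>e'\<in>A. (if e = e' then 1 else 0) * z e') = (z e :: complex)"
proof -
  assume a: "finite A" "e \<in> A"
  have "(\<Sum>e'\<in>A. (if e = e' then 1 else 0) * z e') = (\<Sum>e'\<in>A. if e = e' then z e' else 0)"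
    by (rule sum.cong) auto
  thus ?thesis using a by simp
qed

lemma Qz_val: "i \<in> G \<Longrightarrow> Qv z i = z (snd i)"
  by (cases i) (simp add: mvec_def Qmat_def memG sum_ind finGam)

lemma Qmat_real: "cnj (Qmat i e) = Qmat i e"
  by (cases i) (simp add: Qmat_def)

lemma Qt_out: "e \<notin> \<Gamma> \<Longrightarrow> Qt w e = 0"
  unfolding mvec_def mT_def Qmat_def
  by (intro sum.neutral) (auto simp: memG)

lemma QTQ_vec: "mvec \<Gamma> QTQ z = Qt (mvec G T (Qv z))"
  by (simp add: mvec_mmul finG finGam)

lemma ip_Q: "ip (Qv z) r = (\<Sum>e\<in>\<Gamma>. z e * cnj (Qt (mvec G T r) e))"
proof -
  have "ip (Qv z) r = (\<Sum>i\<in>G. (\<Sum>e\<in>\<Gamma>. Qmat i e * z e) * cnj (mvec G T r i))"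
    unfolding ip_alt mvec_def by simp
  also have "\<dots> = (\<Sum>e\<in>\<Gamma>. \<Sum>i\<in>G. z e * (Qmat i e * cnj (mvec G T r i)))"
    by (simp add: sum_distrib_right sum.swap[of _ G \<Gamma>] mult_ac)
  also have "\<dots> = (\<Sum>e\<in>\<Gamma>. z e * cnj (Qt (mvec G T r) e))"
  proof -
    have c: "\<And>v e. cnj (Qt v e) = (\<Sum>i\<in>G. Qmat i e * cnj (v i))"
      by (simp add: mvec_def mT_def Qmat_real)
    show ?thesis unfolding c by (simp add: sum_distrib_left)
  qed
  finally show ?thesis .
qed

lemma QTQ_inv: "minvertible \<Gamma> QTQ"
proof (rule inj_imp_minvertible[OF finGam])
  fix z assume z: "\<forall>e\<in>\<Gamma>. mvec \<Gamma> QTQ z e = 0"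
  have "ip (Qv z) (Qv z) = 0" unfolding ip_Q using z by (simp add: QTQ_vec)
  hence n0: "nsq (Qv z) \<le> 0" by simp
  show "\<forall>e\<in>\<Gamma>. z e = 0"
  proof
    fix e assume e: "e \<in> \<Gamma>"
    then obtain j where j: "j \<in> {1..J}" "e \<in> Es j" using Gam_cover by blast
    hence "(j, e) \<in> G" using e memG by blast
    thus "z e = 0" using nsq_zero[OF n0] Qz_val by fastforce
  qed
qed

definition wP where "wP x = mvec \<Gamma> (minv \<Gamma> QTQ) (Qt (mvec G T x))"

lemma P_vec: "Pv x = Qv (wP x)"
  unfolding Pmat_def Let_def wP_def by (simp add: mvec_mmul finG finGam)

lemma P_orthQ: "e \<in> \<Gamma> \<Longrightarrow> Qt (mvec G T (\<lambda>i. x i - Pv x i)) e = 0"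
proof -
  assume e: "e \<in> \<Gamma>"
  have "Qt (mvec G T (\<lambda>i. x i - Pv x i)) e = Qt (mvec G T x) e - Qt (mvec G T (Pv x)) e"
    by (simp add: mvec_diff)
  also have "Qt (mvec G T (Pv x)) e = mvec \<Gamma> QTQ (wP x) e" by (simp add: P_vec QTQ_vec)
  also have "\<dots> = Qt (mvec G T x) e"
    unfolding wP_def by (rule minv_right[OF finGam minv_is[OF QTQ_inv] e])
  finally show ?thesis by simp
qed

lemma P_orth: "Qt (mvec G T (\<lambda>i. x i - Pv x i)) e = 0"
  using P_orthQ Qt_out by (cases "e \<in> \<Gamma>") auto

lemma ip_P_orth1: "ip (Pv x) (\<lambda>i. x i - Pv x i) = 0"
  unfolding P_vec ip_Q using P_orth[of x] by (simp add: P_vec)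

lemma ip_P_orth2: "ip (\<lambda>i. x i - Pv x i) (Pv x) = 0"
  using ip_sym ip_P_orth1 by (metis complex_cnj_zero)

lemma Pi_vec: "i \<in> G \<Longrightarrow> mvec G (Pimat J Es \<Gamma> Tb) x i = 2 * Pv x i - x i"
  unfolding Pimat_def by (simp add: mvec_matdiff mvec_matscale mvec_mI finG)

lemma ip_expand:
  "ip (\<lambda>i. a i + c * b i) (\<lambda>i. a i + c * b i) = ip a a + cnj c * ip a b + c * ip b a + c * cnj c * ip b b"
  by (simp add: ip_add_left ip_add_right ip_scale_left ip_scale_right algebra_simps)

lemma Pi_iso: "nsq (mvec G (Pimat J Es \<Gamma> Tb) x) = nsq x"
proof -
  define a where "a = Pv x"
  define r where "r = (\<lambda>i. x i - Pv x i)"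
  have o1: "ip a r = 0" "ip r a = 0" unfolding a_def r_def using ip_P_orth1 ip_P_orth2 by auto
  have "ip (mvec G (Pimat J Es \<Gamma> Tb) x) (mvec G (Pimat J Es \<Gamma> Tb) x)
      = ip (\<lambda>i. a i + (-1) * r i) (\<lambda>i. a i + (-1) * r i)"
    by (rule ip_cong) (simp_all add: Pi_vec a_def r_def)
  also have "\<dots> = ip a a + ip r r" unfolding ip_expand o1 by simp
  also have "\<dots> = ip (\<lambda>i. a i + 1 * r i) (\<lambda>i. a i + 1 * r i)" unfolding ip_expand o1 by simp
  also have "\<dots> = ip x x" by (rule ip_cong) (simp_all add: a_def r_def)
  finally show ?thesis by simp
qed

end

lemma sum_ind2: "finite A \<Longrightarrow> a \<in> A \<Longrightarrow> (\<Sum>b\<in>A. (if a = b then 1 else 0) * z b) = (z a :: complex)"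
proof -
  assume a: "finite A" "a \<in> A"
  have "(\<Sum>b\<in>A. (if a = b then 1 else 0) * z b) = (\<Sum>b\<in>A. if a = b then z b else 0)"
    by (rule sum.cong) auto
  thus ?thesis using a by simp
qed

context sctx begin

abbreviation "A \<equiv> blockdiag Ab"
abbreviation "BTB \<equiv> mmul G (mmul G (mT Bmat) T) Bmat"
abbreviation "Km \<equiv> (\<lambda>i k. A i k - \<i> * BTB i k)"
abbreviation "Bt w \<equiv> mvec G (mT Bmat) w"
abbreviation "Bv v \<equiv> mvec EE Bmat v"
abbreviation "Aq v \<equiv> (\<Sum>i\<in>EE. \<Sum>k\<in>EE. cnj (v i) * A i k * v k)"

lemma Bmat_eq: "Bmat i k = (if i = k then 1 else 0)"
  by (cases i, cases k) (simp add: Bmat_def)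

lemma Bv_val: "i \<in> G \<Longrightarrow> Bv v i = v i"
  unfolding mvec_def Bmat_eq using G_sub finEE by (intro sum_ind2) auto

lemma Bt_val: "i \<in> EE \<Longrightarrow> Bt w i = (if i \<in> G then w i else 0)"
proof -
  have "Bt w i = (\<Sum>k\<in>G. (if i = k then 1 else 0) * w k)"
    unfolding mvec_def mT_def Bmat_eq by (intro sum.cong) auto
  moreover have "i \<notin> G \<Longrightarrow> (\<Sum>k\<in>G. (if i = k then 1 else 0) * w k) = 0"
    by (intro sum.neutral) auto
  ultimately show ?thesis using sum_ind2[OF finG, of i w] by auto
qed

lemma sum_Bt: "(\<Sum>i\<in>EE. cnj (v i) * Bt w i) = (\<Sum>i\<in>G. cnj (v i) * w i)"
proof -
  have "(\<Sum>i\<in>EE. cnj (v i) * Bt w i) = (\<Sum>i\<in>EE. if i \<in> G then cnj (v i) * w i else 0)"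
    by (intro sum.cong) (auto simp: Bt_val)
  also have "\<dots> = (\<Sum>i\<in>EE \<inter> G. cnj (v i) * w i)" using finEE by (simp add: sum.inter_restrict)
  also have "EE \<inter> G = G" using G_sub by blast
  finally show ?thesis .
qed

lemma BTB_vec: "mvec EE BTB v = Bt (mvec G T (Bv v))"
  by (simp add: mvec_mmul finG finEE)

lemma T_Bv: "mvec G T (Bv v) = mvec G T v"
  by (rule mvec_cong) (simp add: Bv_val)

lemma Aq_alt: "Aq v = (\<Sum>i\<in>EE. cnj (v i) * mvec EE A v i)"
  unfolding mvec_def by (simp add: sum_distrib_left mult.assoc)

lemma key_id: "(\<Sum>i\<in>EE. cnj (v i) * mvec EE Km v i) = Aq v - \<i> * complex_of_real (nsq v)"
proof -
  have "(\<Sum>i\<in>EE. cnj (v i) * mvec EE Km v i)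
      = (\<Sum>i\<in>EE. cnj (v i) * mvec EE A v i) - \<i> * (\<Sum>i\<in>EE. cnj (v i) * mvec EE BTB v i)"
    by (simp add: mvec_matdiff mvec_matscale right_diff_distrib sum_subtractf sum_distrib_left mult_ac)
  also have "(\<Sum>i\<in>EE. cnj (v i) * mvec EE BTB v i) = cnj (ip v v)"
    unfolding BTB_vec sum_Bt T_Bv ip_alt2 ..
  also have "cnj (ip v v) = complex_of_real (nsq v)" by (subst ip_real) simp
  finally show ?thesis by (simp add: Aq_alt)
qed

lemma Rv_val: "(j, e) \<in> EE \<Longrightarrow> mvec E Rmat x (j, e) = x e"
proof -
  assume a: "(j, e) \<in> EE"
  hence e: "e \<in> E" using memEE E_union by blast
  have "mvec E Rmat x (j, e) = (\<Sum>e'\<in>E. (if e = e' then 1 else 0) * x e')"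
    unfolding mvec_def Rmat_def by simp
  thus ?thesis using sum_ind2[OF finE e] by simp
qed

lemma glue:
  assumes "\<And>j e. (j, e) \<in> G \<Longrightarrow> v (j, e) = z e"
  shows "\<exists>x. \<forall>i\<in>EE. v i = mvec E Rmat x i"
proof -
  define x where "x e = (if e \<in> \<Gamma> then z e else v (SOME j. j \<in> {1..J} \<and> e \<in> Es j, e))" for e
  have "\<forall>i\<in>EE. v i = mvec E Rmat x i"
  proof
    fix i assume i: "i \<in> EE"
    obtain j e where ij: "i = (j, e)" by (cases i)
    have j: "j \<in> {1..J}" "e \<in> Es j" using i ij memEE by auto
    show "v i = mvec E Rmat x i"
    proof (cases "e \<in> \<Gamma>")
      case True
      hence "(j, e) \<in> G" using j memG by blast
      hence "v (j, e) = z e" by (rule assms)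
      moreover have "mvec E Rmat x (j, e) = x e" using i ij by (intro Rv_val) simp
      moreover have "x e = z e" unfolding x_def using True by simp
      ultimately show ?thesis using ij by simp
    next
      case False
      define j' where "j' = (SOME j. j \<in> {1..J} \<and> e \<in> Es j)"
      have ex: "\<exists>j. j \<in> {1..J} \<and> e \<in> Es j" using j by blast
      have "j' \<in> {1..J} \<and> e \<in> Es j'" unfolding j'_def by (rule someI_ex[OF ex])
      hence jj: "j' = j" using uniq[OF False] j by blast
      have "mvec E Rmat x (j, e) = x e" using i ij by (intro Rv_val) simp
      moreover have "x e = v (j', e)" unfolding x_def j'_def using False by simp
      ultimately show ?thesis using ij jj by simp
    qed
  qed
  thus ?thesis by blast
qed

abbreviation "RAR \<equiv> mmul EE (mmul EE (mT Rmat) A) Rmat"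

lemma R_inj:
  assumes Rt0: "\<And>e. e \<in> E \<Longrightarrow> mvec EE (mT Rmat) (mvec EE A v) e = 0"
    and vx': "\<forall>i\<in>EE. v i = mvec E Rmat x i"
  shows "\<And>i. i \<in> EE \<Longrightarrow> v i = 0"
proof -
  have vx: "\<And>i. i \<in> EE \<Longrightarrow> v i = mvec E Rmat x i" using vx' by blast
  have Nx: "mvec E RAR x e = 0" if e: "e \<in> E" for e
  proof -
    have "mvec E RAR x = mvec EE (mT Rmat) (mvec EE A (mvec E Rmat x))"
      by (simp add: mvec_mmul finE finEE)
    also have "mvec EE A (mvec E Rmat x) = mvec EE A v"
      by (rule mvec_cong) (simp add: vx)
    finally show ?thesis using Rt0[OF e] by simp
  qed
  have x0: "x e = 0" if e: "e \<in> E" for e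
  proof -
    have "x e = mvec E (minv E RAR) (\<lambda>_. 0) e"
      by (rule minv_left[OF finE minv_is[OF A2] Nx e]) 
    thus ?thesis by (simp add: mvec_def)
  qed
  fix i assume i: "i \<in> EE"
  obtain j e where ij: "i = (j, e)" by (cases i)
  have "e \<in> E" using i ij memEE E_union by blast
  thus "v i = 0" using vx[OF i] ij i Rv_val x0 by simp
qed

lemma K_inj:
  assumes Kv: "\<forall>i\<in>EE. mvec EE Km v i = 0"
  shows "\<forall>i\<in>EE. v i = 0"
proof -
  have "Aq v - \<i> * complex_of_real (nsq v) = 0"
    unfolding key_id[symmetric] using Kv by simp
  hence "Im (Aq v) = nsq v" by (simp add: complex_eq_iff)
  hence "nsq v \<le> 0" using A1[of v] by simp
  hence vG: "\<And>i. i \<in> G \<Longrightarrow> v i = 0" using nsq_zero by blast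
  have "mvec G T (Bv v) = mvec G T v" by (rule T_Bv)
  also have "\<dots> = (\<lambda>i. 0)" unfolding mvec_def using vG by simp
  finally have TB0: "mvec G T (Bv v) = (\<lambda>i. 0)" .
  have Av: "mvec EE A v i = 0" if i: "i \<in> EE" for i
  proof -
    have "mvec EE A v i = mvec EE Km v i + \<i> * mvec EE BTB v i"
      by (simp add: mvec_matdiff mvec_matscale)
    also have "mvec EE BTB v i = 0" unfolding BTB_vec TB0 by (simp add: mvec_def)
    finally show ?thesis using Kv i by simp
  qed
  obtain x where vx: "\<forall>i\<in>EE. v i = mvec E Rmat x i"
    using glue[of v "\<lambda>_. 0"] vG by blast
  have Rt0: "mvec EE (mT Rmat) (mvec EE A v) e = 0" for e
  proof -
    have "mvec EE (mT Rmat) (mvec EE A v) = mvec EE (mT Rmat) (\<lambda>_. 0)"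
      by (rule mvec_cong) (simp add: Av)
    thus ?thesis by (simp only: mvec_zero)
  qed
  have "v i = 0" if i: "i \<in> EE" for i
    by (rule R_inj[OF Rt0 vx i])
  thus ?thesis by blast
qed

lemma K_inv: "minvertible EE Km"
  by (rule inj_imp_minvertible[OF finEE]) (rule K_inj)

definition yv where "yv p = mvec EE (minv EE Km) (Bt (mvec G T p))"

abbreviation "Sv p \<equiv> mvec G (Smat J Es \<Gamma> Ab Tb) p"

lemma S_vec: "i \<in> G \<Longrightarrow> Sv p i = p i + 2 * \<i> * yv p i"
proof -
  assume i: "i \<in> G"
  have "Sv p i = mvec G mI p i + 2 * \<i> * mvec G (mmul G (mmul EE (mmul EE Bmat (minv EE Km)) (mT Bmat)) T) p i"
    unfolding Smat_def Let_def by (simp add: mvec_matadd mvec_matscale)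
  also have "mvec G (mmul G (mmul EE (mmul EE Bmat (minv EE Km)) (mT Bmat)) T) p = Bv (yv p)"
    unfolding yv_def by (simp add: mvec_mmul finG finEE)
  finally show ?thesis using i by (simp add: mvec_mI finG Bv_val)
qed

lemma Ky: "i \<in> EE \<Longrightarrow> mvec EE Km (yv p) i = Bt (mvec G T p) i"
  unfolding yv_def by (rule minv_right[OF finEE minv_is[OF K_inv]])

lemma Aq_y: "Aq (yv p) = cnj (ip (yv p) p) + \<i> * complex_of_real (nsq (yv p))"
proof -
  have "(\<Sum>i\<in>EE. cnj (yv p i) * mvec EE Km (yv p) i) = (\<Sum>i\<in>EE. cnj (yv p i) * Bt (mvec G T p) i)"
    by (intro sum.cong) (simp_all add: Ky)
  also have "\<dots> = cnj (ip (yv p) p)" unfolding sum_Bt ip_alt2 ..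
  finally show ?thesis unfolding key_id by (simp add: algebra_simps)
qed

lemma Im_yp: "Im (ip (yv p) p) \<ge> nsq (yv p)"
  using A1[of "yv p"] unfolding Aq_y by simp

lemma S_contr: "nsq (Sv p) \<le> nsq p"
proof -
  let ?y = "yv p"
  have "ip (Sv p) (Sv p) = ip (\<lambda>i. p i + (2 * \<i>) * ?y i) (\<lambda>i. p i + (2 * \<i>) * ?y i)"
    by (rule ip_cong) (simp_all add: S_vec)
  also have "\<dots> = ip p p + cnj (2 * \<i>) * ip p ?y + (2 * \<i>) * ip ?y p + (2 * \<i>) * cnj (2 * \<i>) * ip ?y ?y"
    by (rule ip_expand)
  finally have "nsq (Sv p) = nsq p - 4 * Im (ip ?y p) + 4 * nsq ?y"
    using ip_sym[of p ?y] by simp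
  thus ?thesis using Im_yp[of p] by simp
qed

end

context sctx begin

abbreviation "Mm \<equiv> (\<lambda>i k. mI i k + mmul G (Pimat J Es \<Gamma> Tb) (Smat J Es \<Gamma> Ab Tb) i k)"
abbreviation "qv p \<equiv> mvec G (Pimat J Es \<Gamma> Tb) (Sv p)"

lemma M_val: "i \<in> G \<Longrightarrow> mvec G Mm p i = p i + qv p i"
  by (simp add: mvec_matadd mvec_mI finG mvec_mmul)

lemma q_contr: "nsq (qv p) \<le> nsq p"
  using Pi_iso[of "Sv p"] S_contr[of p] by simp

lemma RtBt: "mvec EE (mT Rmat) (Bt w) e = Qt w e"
proof -
  define bw where "bw = Bt w"
  have bw: "i \<in> EE \<Longrightarrow> bw i = (if i \<in> G then w i else 0)" for i unfolding bw_def by (rule Bt_val)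
  have "mvec EE (mT Rmat) bw e = (\<Sum>i\<in>EE. if i \<in> G then Rmat i e * w i else 0)"
    unfolding mvec_def mT_def by (intro sum.cong) (auto simp: bw)
  also have "\<dots> = (\<Sum>i\<in>EE \<inter> G. Rmat i e * w i)" using finEE by (simp add: sum.inter_restrict)
  also have "EE \<inter> G = G" using G_sub by blast
  also have "(\<Sum>i\<in>G. Rmat i e * w i) = Qt w e"
  proof -
    have RQ: "Rmat = Qmat" unfolding Rmat_def Qmat_def ..
    show ?thesis unfolding RQ mvec_def mT_def ..
  qed
  finally show ?thesis unfolding bw_def .
qed

lemma ip_zero_T: "(\<And>i. i \<in> G \<Longrightarrow> mvec G T p i = 0) \<Longrightarrow> i \<in> G \<Longrightarrow> p i = 0"
proof -
  assume a: "\<And>i. i \<in> G \<Longrightarrow> mvec G T p i = 0" and i: "i \<in> G"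
  have "ip p p = 0" unfolding ip_alt using a by simp
  hence "nsq p \<le> 0" by simp
  thus ?thesis using nsq_zero i by blast
qed

lemma main_inj:
  assumes qp: "\<And>i. i \<in> G \<Longrightarrow> qv p i = - p i"
  shows "\<And>i. i \<in> G \<Longrightarrow> p i = 0"
proof -
  let ?s = "Sv p" and ?y = "yv p"
  have Py: "Pv ?s i = \<i> * ?y i" if i: "i \<in> G" for i
    using qp[OF i] Pi_vec[OF i, of ?s] S_vec[OF i, of p] by (simp add: algebra_simps)
  have yz: "?y (j, e) = - \<i> * wP ?s e" if "(j, e) \<in> G" for j e
    using Py[OF that] P_vec[of ?s] Qz_val[OF that, of "wP ?s"] by simp
  obtain x where yx: "\<forall>i\<in>EE. ?y i = mvec E Rmat x i"
    using glue[of ?y "\<lambda>e. - \<i> * wP ?s e"] yz by blast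
  define r where "r = (\<lambda>k. p k + \<i> * Bv ?y k)"
  have Ay: "mvec EE A ?y i = Bt (mvec G T r) i" if i: "i \<in> EE" for i
  proof -
    have "mvec EE A ?y i = mvec EE Km ?y i + \<i> * mvec EE BTB ?y i"
      by (simp add: mvec_matdiff mvec_matscale)
    also have "\<dots> = Bt (mvec G T p) i + \<i> * Bt (mvec G T (Bv ?y)) i"
      using Ky[OF i] BTB_vec by simp
    also have "\<dots> = Bt (mvec G T r) i"
      unfolding r_def by (simp add: mvec_add mvec_scale)
    finally show ?thesis .
  qed
  have rs: "r k = ?s k - Pv ?s k" if k: "k \<in> G" for k
    unfolding r_def using Py[OF k] S_vec[OF k, of p] Bv_val[OF k] by simp
  have Rt0: "mvec EE (mT Rmat) (mvec EE A ?y) e = 0" for e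
  proof -
    have f1: "mvec EE (mT Rmat) (mvec EE A ?y) = mvec EE (mT Rmat) (Bt (mvec G T r))"
      by (rule mvec_cong) (simp add: Ay)
    have "mvec EE (mT Rmat) (mvec EE A ?y) e = Qt (mvec G T r) e" unfolding f1 by (rule RtBt)
    also have "mvec G T r = mvec G T (\<lambda>k. ?s k - Pv ?s k)" by (rule mvec_cong) (simp add: rs)
    finally show ?thesis using P_orth by simp
  qed
  have y0: "?y i = 0" if i: "i \<in> EE" for i
    by (rule R_inj[OF Rt0 yx i])
  have BT0: "Bt (mvec G T p) i = 0" if i: "i \<in> EE" for i
  proof -
    have "Bt (mvec G T p) i = mvec EE Km ?y i" using Ky[OF i] by simp
    also have "mvec EE Km ?y = mvec EE Km (\<lambda>_. 0)" by (rule mvec_cong) (simp add: y0)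
    finally show ?thesis by (simp add: mvec_zero)
  qed
  have "mvec G T p i = 0" if i: "i \<in> G" for i
    using BT0[of i] i G_sub Bt_val by auto
  thus "\<And>i. i \<in> G \<Longrightarrow> p i = 0" using ip_zero_T by blast
qed

lemma M_inv: "minvertible G Mm"
proof (rule inj_imp_minvertible[OF finG])
  fix p assume h: "\<forall>i\<in>G. mvec G Mm p i = 0"
  have "qv p i = - p i" if i: "i \<in> G" for i
  proof -
    have "p i + qv p i = 0" using M_val[OF i, of p] h i by simp
    thus ?thesis by (metis neg_eq_iff_add_eq_0)
  qed
  thus "\<forall>i\<in>G. p i = 0" using main_inj by blast
qed

lemma nsq_scale: "nsq (\<lambda>i. c * p i) = (cmod c)\<^sup>2 * nsq p"
proof -
  have "ip (\<lambda>i. c * p i) (\<lambda>i. c * p i) = (c * cnj c) * ip p p"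
    by (simp add: ip_scale_left ip_scale_right)
  also have "c * cnj c = complex_of_real ((cmod c)\<^sup>2)" by (rule complex_norm_square[symmetric])
  finally show ?thesis by simp
qed

lemma eigen:
  assumes nz: "\<exists>i\<in>G. p i \<noteq> 0" and ev: "\<forall>i\<in>G. mvec G Mm p i = lam * p i"
  shows "lam \<noteq> 0 \<and> cmod (1 - lam) \<le> 1"
proof -
  have q: "qv p i = (lam - 1) * p i" if i: "i \<in> G" for i
  proof -
    have h: "p i + qv p i = lam * p i" using M_val[OF i, of p] ev i by simp
    hence "qv p i = lam * p i - p i" by (simp add: eq_diff_eq add.commute)
    thus ?thesis by (simp add: algebra_simps)
  qed
  have pos: "nsq p > 0" using nz nsq_pos by blast
  have "nsq (qv p) = nsq (\<lambda>i. (lam - 1) * p i)" by (rule arg_cong[where f=Re], rule ip_cong) (simp_all add: q)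
  also have "\<dots> = (cmod (lam - 1))\<^sup>2 * nsq p" by (rule nsq_scale)
  finally have "(cmod (lam - 1))\<^sup>2 * nsq p \<le> 1 * nsq p" using q_contr[of p] by simp
  hence "(cmod (lam - 1))\<^sup>2 \<le> 1" using pos by (simp only: mult_le_cancel_right)
  hence "cmod (lam - 1) \<le> 1" by (simp add: power_le_one_iff)
  hence c1: "cmod (1 - lam) \<le> 1" by (simp add: norm_minus_commute)
  have "lam \<noteq> 0"
  proof
    assume "lam = 0"
    hence "\<And>i. i \<in> G \<Longrightarrow> qv p i = - p i" using q by simp
    thus False using main_inj nz by blast
  qed
  thus ?thesis using c1 by simp
qed

lemma norm_bound: "normT J Es \<Gamma> Tb (mvec G Mm p) \<le> 2 * normT J Es \<Gamma> Tb p"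
proof -
  let ?q = "qv p"
  have e1: "ip (mvec G Mm p) (mvec G Mm p) = ip (\<lambda>i. p i + 1 * ?q i) (\<lambda>i. p i + 1 * ?q i)"
    by (rule ip_cong) (simp_all add: M_val)
  have "nsq (mvec G Mm p) + nsq (\<lambda>i. p i + (-1) * ?q i) = 2 * nsq p + 2 * nsq ?q"
    unfolding e1 ip_expand by simp
  moreover have "nsq (\<lambda>i. p i + (-1) * ?q i) \<ge> 0" by (rule nsq_nonneg)
  ultimately have "nsq (mvec G Mm p) \<le> 4 * nsq p" using q_contr[of p] by linarith
  hence "sqrt (nsq (mvec G Mm p)) \<le> sqrt (4 * nsq p)" by (rule real_sqrt_le_mono)
  also have "sqrt (4 * nsq p) = 2 * sqrt (nsq p)" by (simp add: real_sqrt_mult)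
  finally show ?thesis unfolding normT_def .
qed

definition fq where "fq p = Re (ip p (mvec G Mm p))"

lemma fq_lower: "2 * fq p \<ge> nsq (mvec G Mm p)"
proof -
  let ?q = "qv p"
  have e1: "ip (mvec G Mm p) (mvec G Mm p) = ip (\<lambda>i. p i + 1 * ?q i) (\<lambda>i. p i + 1 * ?q i)"
    by (rule ip_cong) (simp_all add: M_val)
  have e2: "ip p (mvec G Mm p) = ip p (\<lambda>i. p i + 1 * ?q i)"
    by (rule ip_cong) (simp_all add: M_val)
  have "nsq (mvec G Mm p) = nsq p + 2 * Re (ip p ?q) + nsq ?q"
    unfolding e1 ip_expand using ip_sym[of ?q p] by simp
  moreover have "fq p = nsq p + Re (ip p ?q)"
    unfolding fq_def e2 by (simp add: ip_add_right)
  ultimately show ?thesis using q_contr[of p] by linarith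
qed

lemma fq_pos: "i \<in> G \<Longrightarrow> p i \<noteq> 0 \<Longrightarrow> fq p > 0"
proof -
  assume i: "i \<in> G" "p i \<noteq> 0"
  have "\<exists>k\<in>G. mvec G Mm p k \<noteq> 0"
  proof (rule ccontr)
    assume "\<not> ?thesis"
    hence h: "\<forall>k\<in>G. mvec G Mm p k = 0" by blast
    have "qv p k = - p k" if k: "k \<in> G" for k
    proof -
      have "p k + qv p k = 0" using M_val[OF k, of p] h k by simp
      thus ?thesis by (metis neg_eq_iff_add_eq_0)
    qed
    thus False using main_inj i by blast
  qed
  hence "nsq (mvec G Mm p) > 0" using nsq_pos by blast
  thus ?thesis using fq_lower[of p] by linarith
qed

end

lemma cont_coord [continuous_intros]: "continuous_on S (\<lambda>x. x i)"
  by (rule continuous_on_subset[OF continuous_on_product_coordinates]) simp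

lemma compact_box:
  fixes G :: "'a set"
  shows "compact (Pi UNIV (\<lambda>i. if i \<in> G then cball (0::complex) 1 else {0}))"
proof -
  have "compactin (product_topology (\<lambda>i. euclidean) UNIV) (PiE UNIV (\<lambda>i. if i \<in> G then cball (0::complex) 1 else {0}))"
    by (subst compactin_PiE) (auto simp: compactin_euclidean_iff)
  thus ?thesis by (simp add: euclidean_product_topology PiE_UNIV_domain compactin_euclidean_iff)
qed

context sctx begin

definition r2 :: "(nat \<times> 'e \<Rightarrow> complex) \<Rightarrow> real" where "r2 p = (\<Sum>i\<in>G. (cmod (p i))\<^sup>2)"

lemma r2_ge: "i \<in> G \<Longrightarrow> (cmod (p i))\<^sup>2 \<le> r2 p"
  unfolding r2_def by (rule member_le_sum) (auto simp: finG)

lemma r2_nonneg: "r2 p \<ge> 0"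
  unfolding r2_def by (simp add: sum_nonneg)

lemma r2_zero: "r2 p = 0 \<Longrightarrow> i \<in> G \<Longrightarrow> p i = 0"
  unfolding r2_def using finG by (simp add: sum_nonneg_eq_0_iff)

lemma ip_zero: "(\<And>i. i \<in> G \<Longrightarrow> p i = 0) \<Longrightarrow> ip p y = 0"
proof -
  assume "\<And>i. i \<in> G \<Longrightarrow> p i = 0"
  hence "ip p y = ip (\<lambda>_. 0) y" by (intro ip_cong) auto
  thus ?thesis by (simp add: innerT_def)
qed

lemma fq_cong: "(\<And>i. i \<in> G \<Longrightarrow> p i = p' i) \<Longrightarrow> fq p = fq p'"
proof -
  assume a: "\<And>i. i \<in> G \<Longrightarrow> p i = p' i"
  have "mvec G Mm p = mvec G Mm p'" by (rule mvec_cong) (simp add: a)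
  thus ?thesis unfolding fq_def using a by (simp cong: ip_cong)
qed

lemma fq_scale: "fq (\<lambda>i. complex_of_real c * x i) = c\<^sup>2 * fq x"
proof -
  have "mvec G Mm (\<lambda>i. complex_of_real c * x i) = (\<lambda>i. complex_of_real c * mvec G Mm x i)"
    by (rule mvec_scale)
  thus ?thesis unfolding fq_def by (simp add: ip_scale_left ip_scale_right power2_eq_square)
qed

lemma nsq_bound: "nsq p \<le> (\<Sum>i\<in>G. \<Sum>k\<in>G. cmod (T i k)) * r2 p"
proof -
  have b: "cmod (p i) * cmod (p k) \<le> r2 p" if "i \<in> G" "k \<in> G" for i k
  proof -
    have "cmod (p i) \<le> sqrt (r2 p)" "cmod (p k) \<le> sqrt (r2 p)"
      using r2_ge[OF that(1), of p] r2_ge[OF that(2), of p] real_le_rsqrt by auto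
    hence "cmod (p i) * cmod (p k) \<le> sqrt (r2 p) * sqrt (r2 p)" using r2_nonneg[of p] by (intro mult_mono) auto
    thus ?thesis using r2_nonneg[of p] by simp
  qed
  have "nsq p \<le> cmod (ip p p)" by (rule complex_Re_le_cmod)
  also have "\<dots> \<le> (\<Sum>i\<in>G. \<Sum>k\<in>G. cmod (p i * T i k * cnj (p k)))"
    unfolding innerT_def by (intro order.trans[OF norm_sum sum_mono] norm_sum)
  also have "\<dots> \<le> (\<Sum>i\<in>G. \<Sum>k\<in>G. cmod (T i k) * r2 p)"
  proof (intro sum_mono)
    fix i k assume ik: "i \<in> G" "k \<in> G"
    have "cmod (p i * T i k * cnj (p k)) = cmod (T i k) * (cmod (p i) * cmod (p k))"
      by (simp add: norm_mult)
    also have "\<dots> \<le> cmod (T i k) * r2 p" by (intro mult_left_mono b ik) simp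
    finally show "cmod (p i * T i k * cnj (p k)) \<le> cmod (T i k) * r2 p" .
  qed
  also have "\<dots> = (\<Sum>i\<in>G. \<Sum>k\<in>G. cmod (T i k)) * r2 p" by (simp add: sum_distrib_right)
  finally show ?thesis .
qed

lemma fq_cont: "continuous_on S fq"
  unfolding fq_def innerT_def mvec_def by (intro continuous_intros)

lemma r2_cont: "continuous_on S r2"
  unfolding r2_def by (intro continuous_intros)

lemma coercive: "\<exists>\<alpha>>0. \<forall>p. Re (ip p (mvec G Mm p)) \<ge> \<alpha> * (normT J Es \<Gamma> Tb p)\<^sup>2"
proof -
  define Sph where "Sph = Pi UNIV (\<lambda>i. if i \<in> G then cball (0::complex) 1 else {0}) \<inter> {p. r2 p = 1}"
  have cS: "compact Sph" unfolding Sph_def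
    by (intro compact_Int_closed compact_box closed_Collect_eq r2_cont continuous_on_const)
  define C where "C = 1 + (\<Sum>i\<in>G. \<Sum>k\<in>G. cmod (T i k))"
  have C: "C > 0" unfolding C_def by (smt (verit) sum_nonneg norm_ge_zero)
  have nsqC: "nsq p \<le> C * r2 p" for p
    using nsq_bound[of p] r2_nonneg[of p] unfolding C_def by (simp add: distrib_right)
  have normsq: "(normT J Es \<Gamma> Tb p)\<^sup>2 = nsq p" for p
    unfolding normT_def using nsq_nonneg by simp
  have zero_case: "Re (ip p (mvec G Mm p)) \<ge> a * (normT J Es \<Gamma> Tb p)\<^sup>2" if "r2 p = 0" for p a
  proof -
    have z: "\<And>i. i \<in> G \<Longrightarrow> p i = 0" using r2_zero that by blast
    show ?thesis unfolding normsq using ip_zero[OF z] by simp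
  qed
  have inS: "(\<lambda>i. if i \<in> G then p i / complex_of_real (sqrt (r2 p)) else 0) \<in> Sph" if r: "r2 p > 0" for p
  proof -
    let ?h = "\<lambda>i. if i \<in> G then p i / complex_of_real (sqrt (r2 p)) else 0"
    have "r2 ?h = (\<Sum>i\<in>G. (cmod (?h i))\<^sup>2)" by (simp only: r2_def)
    also have "\<dots> = (\<Sum>i\<in>G. (cmod (p i))\<^sup>2 / r2 p)"
    proof (intro sum.cong refl)
      fix i assume i: "i \<in> G"
      have "(cmod (?h i))\<^sup>2 = (cmod (p i))\<^sup>2 / (sqrt (r2 p))\<^sup>2" using i by (simp add: norm_divide power_divide)
      also have "(sqrt (r2 p))\<^sup>2 = r2 p" using r by simp
      finally show "(cmod (?h i))\<^sup>2 = (cmod (p i))\<^sup>2 / r2 p" .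
    qed
    also have "\<dots> = r2 p / r2 p" by (simp add: sum_divide_distrib[symmetric] r2_def)
    also have "\<dots> = 1" using r by simp
    finally have h1: "r2 ?h = 1" .
    have "?h i \<in> (if i \<in> G then cball 0 1 else {0})" for i
    proof (cases "i \<in> G")
      case True
      have "(cmod (?h i))\<^sup>2 \<le> 1" using r2_ge[OF True, of ?h] h1 by simp
      hence "cmod (?h i) \<le> 1" by (simp add: power_le_one_iff)
      thus ?thesis using True by simp
    qed simp
    thus ?thesis unfolding Sph_def using h1 by auto
  qed
  show ?thesis
  proof (cases "Sph = {}")
    case True
    have "Re (ip p (mvec G Mm p)) \<ge> 1 * (normT J Es \<Gamma> Tb p)\<^sup>2" for p
    proof (cases "r2 p = 0")
      case True thus ?thesis by (rule zero_case)
    next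
      case False
      hence "r2 p > 0" using r2_nonneg[of p] by simp
      from inS[OF this] \<open>Sph = {}\<close> show ?thesis by simp
    qed
    hence "\<forall>p. Re (ip p (mvec G Mm p)) \<ge> 1 * (normT J Es \<Gamma> Tb p)\<^sup>2" by blast
    thus ?thesis by (intro exI[of _ "1::real"] conjI) simp_all
  next
    case False
    obtain p0 where p0: "p0 \<in> Sph" and minp: "\<forall>p\<in>Sph. fq p0 \<le> fq p"
      using continuous_attains_inf[OF cS False fq_cont] by (elim bexE) blast
    have "\<exists>i\<in>G. p0 i \<noteq> 0"
    proof (rule ccontr)
      assume "\<not> ?thesis"
      hence "r2 p0 = 0" unfolding r2_def by simp
      thus False using p0 unfolding Sph_def by simp
    qed
    then obtain i0 where "i0 \<in> G" "p0 i0 \<noteq> 0" by blast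
    hence m: "fq p0 > 0" by (rule fq_pos)
    define \<alpha> where "\<alpha> = fq p0 / C"
    have apos: "\<alpha> > 0" unfolding \<alpha>_def using m C by simp
    have "Re (ip p (mvec G Mm p)) \<ge> \<alpha> * (normT J Es \<Gamma> Tb p)\<^sup>2" for p
    proof (cases "r2 p = 0")
      case True thus ?thesis by (rule zero_case)
    next
      case False
      hence r: "r2 p > 0" using r2_nonneg[of p] by simp
      let ?rho = "sqrt (r2 p)"
      let ?h = "\<lambda>i. if i \<in> G then p i / complex_of_real ?rho else 0"
      have rho: "?rho > 0" using r by simp
      have "fq p = fq (\<lambda>i. complex_of_real ?rho * ?h i)"
        by (rule fq_cong) (use rho in simp)
      also have "\<dots> = r2 p * fq ?h" unfolding fq_scale using r by simp
      finally have fp: "fq p = r2 p * fq ?h" .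
      have "fq p0 \<le> fq ?h" using minp inS[OF r] by (rule bspec)
      hence "r2 p * fq p0 \<le> fq p" unfolding fp using r by (simp add: mult_left_mono)
      moreover have "\<alpha> * nsq p \<le> \<alpha> * (C * r2 p)" using nsqC[of p] apos by (simp add: mult_left_mono)
      moreover have "\<alpha> * (C * r2 p) = r2 p * fq p0" unfolding \<alpha>_def using C by simp
      ultimately show ?thesis unfolding normsq fq_def by linarith
    qed
    hence "\<forall>p. Re (ip p (mvec G Mm p)) \<ge> \<alpha> * (normT J Es \<Gamma> Tb p)\<^sup>2" by blast
    thus ?thesis using apos by (intro exI[of _ \<alpha>] conjI) simp_all
  qed
qed

end

theorem proposition1:
  fixes E :: "'e set" and J :: nat and Es :: "nat \<Rightarrow> 'e set" and \<Gamma> :: "'e set"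
    and Tb :: "nat \<Rightarrow> 'e \<Rightarrow> 'e \<Rightarrow> real" and Ab :: "nat \<Rightarrow> 'e \<Rightarrow> 'e \<Rightarrow> complex"
  assumes finE: "finite E"
    and E_union: "E = (\<Union>j\<in>{1..J}. Es j)"
    and Sigma_sub: "Sigma_set J Es \<subseteq> \<Gamma>"
    and Gamma_sub: "\<Gamma> \<subseteq> E"
    and T_sym: "\<And>j e e'. j \<in> {1..J} \<Longrightarrow> e \<in> \<Gamma> \<inter> Es j \<Longrightarrow> e' \<in> \<Gamma> \<inter> Es j \<Longrightarrow>
                  Tb j e e' = Tb j e' e"
    and T_posdef: "\<And>j (x :: 'e \<Rightarrow> real). j \<in> {1..J} \<Longrightarrow> (\<exists>e\<in>\<Gamma> \<inter> Es j. x e \<noteq> 0) \<Longrightarrow>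
                  (\<Sum>e\<in>\<Gamma> \<inter> Es j. \<Sum>e'\<in>\<Gamma> \<inter> Es j. x e * Tb j e e' * x e') > 0"
    and A1: "\<And>v. Im (\<Sum>i\<in>EO J Es. \<Sum>k\<in>EO J Es. cnj (v i) * blockdiag Ab i k * v k) \<le> 0"
    and A2: "minvertible E (mmul (EO J Es) (mmul (EO J Es) (mT Rmat) (blockdiag Ab)) Rmat)"
  defines "M \<equiv> (\<lambda>i k. mI i k + mmul (GO J Es \<Gamma>) (Pimat J Es \<Gamma> Tb) (Smat J Es \<Gamma> Ab Tb) i k)"
  shows "minvertible (GO J Es \<Gamma>) M
         \<and> (\<forall>lam p. (\<exists>i\<in>GO J Es \<Gamma>. p i \<noteq> 0) \<and>
               (\<forall>i\<in>GO J Es \<Gamma>. mvec (GO J Es \<Gamma>) M p i = lam * p i) \<longrightarrow>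
               lam \<noteq> 0 \<and> cmod (1 - lam) \<le> 1)
         \<and> (\<forall>p. normT J Es \<Gamma> Tb (mvec (GO J Es \<Gamma>) M p) \<le> 2 * normT J Es \<Gamma> Tb p)
         \<and> (\<exists>\<alpha>>0. \<forall>p. Re (innerT J Es \<Gamma> Tb p (mvec (GO J Es \<Gamma>) M p))
                         \<ge> \<alpha> * (normT J Es \<Gamma> Tb p)\<^sup>2)"
proof -
  interpret L: sctx E J Es \<Gamma> Tb Ab
    by (rule sctx.intro[OF finE E_union Sigma_sub Gamma_sub T_sym T_posdef A1 A2])
  have c1: "minvertible (GO J Es \<Gamma>) M" unfolding M_def by (rule L.M_inv)
  have c2: "\<forall>lam p. (\<exists>i\<in>GO J Es \<Gamma>. p i \<noteq> 0) \<and>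
               (\<forall>i\<in>GO J Es \<Gamma>. mvec (GO J Es \<Gamma>) M p i = lam * p i) \<longrightarrow>
               lam \<noteq> 0 \<and> cmod (1 - lam) \<le> 1"
  proof (intro allI impI)
    fix lam p
    assume "(\<exists>i\<in>GO J Es \<Gamma>. p i \<noteq> 0) \<and> (\<forall>i\<in>GO J Es \<Gamma>. mvec (GO J Es \<Gamma>) M p i = lam * p i)"
    thus "lam \<noteq> 0 \<and> cmod (1 - lam) \<le> 1" unfolding M_def using L.eigen by blast
  qed
  have c3: "\<forall>p. normT J Es \<Gamma> Tb (mvec (GO J Es \<Gamma>) M p) \<le> 2 * normT J Es \<Gamma> Tb p"
    unfolding M_def using L.norm_bound by blast
  have c4: "\<exists>\<alpha>>0. \<forall>p. Re (innerT J Es \<Gamma> Tb p (mvec (GO J Es \<Gamma>) M p))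
                         \<ge> \<alpha> * (normT J Es \<Gamma> Tb p)\<^sup>2"
    unfolding M_def by (rule L.coercive)
  show ?thesis using c1 c2 c3 c4 by blast
qed

end
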